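(* Let $d\ge 3$ be an integer, $p\in(0,1]$, and $\delta\in(0,1)$ with $\delta dp\ge 2\log^2 d$. Consider any realisation of $Q^d_p$ and the pruning process defined in the context. Let $t\in[2,\tau]\cap\mathbb{N}$. If $v\in A_t$, then there is a set $X$ of at least $\left(\frac{\delta dp}{2t\log d}\right)^{t-1}$ vertices, each at distance exactly $t-1$ from $v$ in $Q^d$, such that for all $x\in X$, $d_{Q^d_p}(x)\notin[(1-\delta_1)dp,(1+\delta_1)dp]$ (indeed $X\subseteq A_1$).
   Context: $Q^d$ is the $d$-dimensional hypercube (vertex set $\{0,1\}^d$, adjacency = Hamming distance one), and $Q^d_p$ is obtained by retaining each edge of $Q^d$ independently with probability $p$. For a graph $F$ and $S\subseteq V(F)$, $F[S]$ is the induced subgraph. Pruning process: let $\tau=\lfloor\log d\rfloor$ (natural log) and $\delta_t=\frac{t\delta}{\lfloor\log d\rfloor}$ for $t\in\mathbb{N}$. Let $H_1=Q^d_p$ and $A_1=\{v\in V(Q^d): d_{H_1}(v)\notin[(1-\delta_1)dp,(1+\delta_1)dp]\}$. For $t=2,\dots,\tau$, let $H_t=Q^d_p\left[V(Q^d)\setminus\bigcup_{i=1}^{t-1}A_i\right]$ and $A_t=\{v\in V(H_t): d_{H_t}(v)<(1-\delta_t)dp\}$. Finally $H=H_\tau$ and $A=\bigcup_{t=1}^\tau A_t$. Distances are in $Q^d$; $N^k(v)$ is the set of vertices at distance exactly $k$ from $v$ in $Q^d$. *)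

theory Defs
  imports Complex_Main
begin

text \<open>Vertices of Q^d: subsets of {0..<d} (identified with 0/1-vectors of length d).\<close>
definition cube_verts :: "nat \<Rightarrow> nat set set" where
  "cube_verts d = Pow {..<d}"

text \<open>Hamming distance = graph distance in Q^d.\<close>
definition hdist :: "nat set \<Rightarrow> nat set \<Rightarrow> nat" where
  "hdist u v = card ((u - v) \<union> (v - u))"

definition cube_edges :: "nat \<Rightarrow> nat set set set" where
  "cube_edges d = {{u, v} | u v. u \<in> cube_verts d \<and> v \<in> cube_verts d \<and> hdist u v = 1}"

definition sphere :: "nat \<Rightarrow> nat \<Rightarrow> nat set \<Rightarrow> nat set set" where
  "sphere d k v = {x \<in> cube_verts d. hdist v x = k}"

definition deg_in :: "nat set set set \<Rightarrow> nat set set \<Rightarrow> nat set \<Rightarrow> nat" where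
  "deg_in E R v = card {w \<in> R. {v, w} \<in> E}"

definition tau :: "nat \<Rightarrow> nat" where
  "tau d = nat \<lfloor>ln (real d)\<rfloor>"

definition delta_t :: "nat \<Rightarrow> real \<Rightarrow> nat \<Rightarrow> real" where
  "delta_t d \<delta> t = real t * \<delta> / real (tau d)"

text \<open>One pruning step: the set A_t, given the current remaining vertex set R
  (R is V(Q^d) for t = 1).\<close>
definition prune_step ::
  "nat \<Rightarrow> real \<Rightarrow> real \<Rightarrow> nat set set set \<Rightarrow> nat \<Rightarrow> nat set set \<Rightarrow> nat set set" where
  "prune_step d p \<delta> E t R =
     (if t = 1 then
        {v \<in> R. real (deg_in E R v) \<notin> {(1 - delta_t d \<delta> 1) * d * p .. (1 + delta_t d \<delta> 1) * d * p}}
      else {v \<in> R. real (deg_in E R v) < (1 - delta_t d \<delta> t) * d * p})"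

primrec removed :: "nat \<Rightarrow> real \<Rightarrow> real \<Rightarrow> nat set set set \<Rightarrow> nat \<Rightarrow> nat set set" where
  "removed d p \<delta> E 0 = {}"
| "removed d p \<delta> E (Suc t) =
     removed d p \<delta> E t \<union> prune_step d p \<delta> E (Suc t) (cube_verts d - removed d p \<delta> E t)"

text \<open>A_t (for t \<ge> 1): H_t has vertex set V(Q^d) minus A_1 \<union> ... \<union> A_{t-1}.\<close>
definition pruneA :: "nat \<Rightarrow> real \<Rightarrow> real \<Rightarrow> nat set set set \<Rightarrow> nat \<Rightarrow> nat set set" where
  "pruneA d p \<delta> E t = prune_step d p \<delta> E t (cube_verts d - removed d p \<delta> E (t - 1))"

end

theory Submission imports Defs begin

definition sd :: "nat set \<Rightarrow> nat set \<Rightarrow> nat set" where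
  "sd u S = (u - S) \<union> (S - u)"

lemma sd_empty[simp]: "sd u {} = u" by (auto simp: sd_def)
lemma sd_insert: "i \<notin> S \<Longrightarrow> sd u (insert i S) = sd (sd u {i}) S"
  by (auto simp: sd_def)
lemma sd_sd: "sd u (sd u S) = S" by (auto simp: sd_def)
lemma hdist_sd: "hdist v (sd v S) = card S"
proof -
  have "(v - sd v S) \<union> (sd v S - v) = S" by (auto simp: sd_def)
  thus ?thesis by (simp add: hdist_def)
qed

lemma count_lemma:
  fixes A :: "nat \<Rightarrow> nat set set" and c :: real
  assumes c0: "c \<ge> 0"
    and step: "\<And>s u. 1 \<le> s \<Longrightarrow> s + 1 \<le> t \<Longrightarrow> u \<in> A (Suc s) \<Longrightarrow>
        real (card {i\<in>{..<d}. sd u {i} \<in> A s}) \<ge> c + real t"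
  shows "Suc n \<le> t \<Longrightarrow> u \<in> A (Suc n) \<Longrightarrow> F \<subseteq> {..<d} \<Longrightarrow> card F + Suc n \<le> t \<Longrightarrow>
     real (card {S. S \<subseteq> {..<d} - F \<and> card S = n \<and> sd u S \<in> A 1}) \<ge> c ^ n / fact n"
proof (induction n arbitrary: u F)
  case 0
  have "{S. S \<subseteq> {..<d} - F \<and> card S = 0 \<and> sd u S \<in> A 1} = {{}}"
  proof (intro equalityI subsetI)
    fix S assume "S \<in> {S. S \<subseteq> {..<d} - F \<and> card S = 0 \<and> sd u S \<in> A 1}"
    hence S1: "S \<subseteq> {..<d}" and S2: "card S = 0" by auto
    have "finite S" using S1 by (rule finite_subset) simp
    with S2 show "S \<in> {{}}" by simp
  qed (use 0 in auto)
  thus ?case by simp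
next
  case (Suc n)
  define Y where "Y = (\<lambda>u F. {S. S \<subseteq> {..<d} - F \<and> card S = n \<and> sd u S \<in> A 1})"
  define Y1 where "Y1 = {S. S \<subseteq> {..<d} - F \<and> card S = Suc n \<and> sd u S \<in> A 1}"
  define I0 where "I0 = {i\<in>{..<d}. sd u {i} \<in> A (Suc n)}"
  define I where "I = I0 - F"
  have finF: "finite F" by (rule finite_subset[OF Suc.prems(3)]) simp
  have "real (card I0) \<ge> c + real t"
    unfolding I0_def using step[of "Suc n" u] Suc.prems by simp
  moreover have "card I0 \<le> card I + card F"
  proof -
    have "I0 \<subseteq> I \<union> F" unfolding I_def by blast
    moreover have "finite (I \<union> F)" using finF unfolding I_def I0_def by auto
    ultimately have "card I0 \<le> card (I \<union> F)" by (rule card_mono[rotated])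
    thus ?thesis using card_Un_le[of I F] by linarith
  qed
  moreover have "card F \<le> t" using Suc.prems(4) by simp
  hence "real (card F) \<le> real t" by simp
  ultimately have cI: "real (card I) \<ge> c" by linarith
  have finI: "finite I" unfolding I_def I0_def by auto
  have IH: "real (card (Y (sd u {i}) (insert i F))) \<ge> c ^ n / fact n" if "i \<in> I" for i
    unfolding Y_def
    apply (rule Suc.IH)
    using Suc.prems that finF by (auto simp: I_def I0_def)
  have finY: "finite (Y u' F')" for u' F' unfolding Y_def
    by (rule finite_subset[of _ "Pow {..<d}"]) auto
  have finY1: "finite Y1" unfolding Y1_def
    by (rule finite_subset[of _ "Pow {..<d}"]) auto
  have finS: "\<And>S. S \<in> Y1 \<Longrightarrow> finite S"
  proof -
    fix S assume "S \<in> Y1"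
    hence "S \<subseteq> {..<d}" unfolding Y1_def by blast
    thus "finite S" by (rule finite_subset) simp
  qed
  have finS1: "finite (Sigma Y1 (\<lambda>S. S))" using finY1 finS by (intro finite_SigmaI) auto
  let ?g = "\<lambda>(i, S'). (insert i S', i)"
  have memY: "S' \<subseteq> {..<d} - insert i F" "card S' = n" "sd (sd u {i}) S' \<in> A 1"
    if "S' \<in> Y (sd u {i}) (insert i F)" for S' i
    using that unfolding Y_def by auto
  have inj: "inj_on ?g (Sigma I (\<lambda>i. Y (sd u {i}) (insert i F)))"
  proof (rule inj_onI)
    fix x y
    assume x: "x \<in> Sigma I (\<lambda>i. Y (sd u {i}) (insert i F))"
       and y: "y \<in> Sigma I (\<lambda>i. Y (sd u {i}) (insert i F))" and eq: "?g x = ?g y"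
    obtain i S' where xi: "x = (i, S')" by (cases x)
    obtain j T' where yj: "y = (j, T')" by (cases y)
    have ij: "i = j" and ins: "insert i S' = insert j T'" using eq xi yj by auto
    have "S' \<in> Y (sd u {i}) (insert i F)" using x xi by simp
    hence iS: "i \<notin> S'" using memY(1) by blast
    have "T' \<in> Y (sd u {i}) (insert i F)" using y yj ij by simp
    hence iT: "i \<notin> T'" using memY(1) by blast
    have "S' = insert i S' - {i}" using iS by simp
    also have "\<dots> = insert i T' - {i}" using ins ij by simp
    also have "\<dots> = T'" using iT by simp
    finally show "x = y" using xi yj ij by simp
  qed
  have img: "?g ` (Sigma I (\<lambda>i. Y (sd u {i}) (insert i F))) \<subseteq> Sigma Y1 (\<lambda>S. S)"
  proof (rule subsetI)
    fix z assume "z \<in> ?g ` (Sigma I (\<lambda>i. Y (sd u {i}) (insert i F)))"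
    then obtain i S' where iI: "i \<in> I" and S': "S' \<in> Y (sd u {i}) (insert i F)"
      and z: "z = (insert i S', i)" by auto
    note m = memY[OF S']
    have iS: "i \<notin> S'" using m(1) by blast
    have fS: "finite S'" using m(1) by (rule finite_subset) simp
    have id: "i < d" "i \<notin> F" using iI unfolding I_def I0_def by auto
    have "insert i S' \<subseteq> {..<d} - F" using m(1) id by auto
    moreover have "card (insert i S') = Suc n" using fS iS m(2) by simp
    moreover have "sd u (insert i S') \<in> A 1" using m(3) sd_insert[OF iS] by simp
    ultimately have "insert i S' \<in> Y1" unfolding Y1_def by blast
    thus "z \<in> Sigma Y1 (\<lambda>S. S)" using z by simp
  qed
  have "real (card (Sigma I (\<lambda>i. Y (sd u {i}) (insert i F)))) \<le> real (card (Sigma Y1 (\<lambda>S. S)))"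
    using card_inj_on_le[OF inj img finS1] by simp
  also have "card (Sigma Y1 (\<lambda>S. S)) = (\<Sum>S\<in>Y1. card S)"
    using finY1 finS by (simp add: card_SigmaI)
  also have "\<dots> = Suc n * card Y1" by (simp add: Y1_def)
  finally have A: "real (card (Sigma I (\<lambda>i. Y (sd u {i}) (insert i F)))) \<le> real (Suc n) * real (card Y1)"
    by (simp only: of_nat_mult[symmetric])
  have "real (card (Sigma I (\<lambda>i. Y (sd u {i}) (insert i F))))
        = (\<Sum>i\<in>I. real (card (Y (sd u {i}) (insert i F))))"
    using finI finY by (simp add: card_SigmaI)
  also have "\<dots> \<ge> (\<Sum>i\<in>I. c ^ n / fact n)" by (rule sum_mono) (use IH in auto)
  finally have B: "real (card I) * (c ^ n / fact n) \<le> real (Suc n) * real (card Y1)"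
    using A by simp
  have "c * (c ^ n / fact n) \<le> real (card I) * (c ^ n / fact n)"
    using cI c0 by (intro mult_right_mono) auto
  with B have "c ^ Suc n / fact n \<le> real (Suc n) * real (card Y1)" by simp
  hence "c ^ Suc n / fact n / real (Suc n) \<le> real (card Y1)"
    by (subst pos_divide_le_eq) (simp_all add: mult.commute)
  moreover have "c ^ Suc n / fact (Suc n) = c ^ Suc n / fact n / real (Suc n)"
    by (simp add: fact_Suc divide_divide_eq_left mult.commute)
  ultimately have "c ^ Suc n / fact (Suc n) \<le> real (card Y1)" by (simp only:)
  thus ?case unfolding Y1_def .
qed


lemma removed_Suc: "removed d p \<delta> E (Suc k) = removed d p \<delta> E k \<union> pruneA d p \<delta> E (Suc k)"
  by (simp add: pruneA_def)

lemma pruneA_sub: "pruneA d p \<delta> E s \<subseteq> cube_verts d - removed d p \<delta> E (s - 1)"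
  by (auto simp: pruneA_def prune_step_def)

lemma edge_sd:
  assumes "{u, w} \<in> cube_edges d"
  shows "\<exists>i<d. w = sd u {i}"
proof -
  obtain a b where ab: "{u, w} = {a, b}" "a \<in> cube_verts d" "b \<in> cube_verts d" "hdist a b = 1"
    using assms unfolding cube_edges_def by blast
  have hs: "hdist x y = hdist y x" for x y unfolding hdist_def by (simp add: Un_commute)
  have uw: "u \<in> cube_verts d" "w \<in> cube_verts d" "hdist u w = 1"
    using ab hs by (auto simp: doubleton_eq_iff)
  then obtain i where i: "(u - w) \<union> (w - u) = {i}"
    unfolding hdist_def using card_1_singletonE by blast
  have "w = sd u {i}" unfolding sd_def
  proof (intro equalityI subsetI)
    fix x assume "x \<in> w" thus "x \<in> (u - {i}) \<union> ({i} - u)" using i by blast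
  next
    fix x assume "x \<in> (u - {i}) \<union> ({i} - u)" thus "x \<in> w" using i by blast
  qed
  moreover have "i < d" using i uw by (auto simp: cube_verts_def)
  ultimately show ?thesis by blast
qed

lemma neighbor_count:
  assumes s1: "1 \<le> s" and u: "u \<in> pruneA d p \<delta> E (Suc s)"
  shows "real (card {w \<in> pruneA d p \<delta> E s. {u, w} \<in> E}) > (delta_t d \<delta> (Suc s) - delta_t d \<delta> s) * d * p"
proof -
  define R where "R = cube_verts d - removed d p \<delta> E (s - 1)"
  define R' where "R' = cube_verts d - removed d p \<delta> E s"
  define A where "A = pruneA d p \<delta> E s"
  have sS: "s = Suc (s - 1)" using s1 by simp
  have AR: "A \<subseteq> R" unfolding A_def R_def using pruneA_sub by blast
  have rem: "removed d p \<delta> E s = removed d p \<delta> E (s - 1) \<union> A"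
    unfolding A_def using removed_Suc[of d p \<delta> E "s - 1"] sS by metis
  have R'eq: "R' = R - A" unfolding R'_def R_def rem by blast
  have uR': "u \<in> R'" using pruneA_sub[of d p \<delta> E "Suc s"] u unfolding R'_def by auto
  hence uR: "u \<in> R" and uA: "u \<notin> A" using R'eq by auto
  have fin: "finite R" unfolding R_def cube_verts_def by auto
  have split: "{w \<in> R. {u, w} \<in> E} = {w \<in> R'. {u, w} \<in> E} \<union> {w \<in> A. {u, w} \<in> E}"
    using R'eq AR by auto
  have "deg_in E R u = deg_in E R' u + card {w \<in> A. {u, w} \<in> E}"
    unfolding deg_in_def split
    by (rule card_Un_disjoint) (use fin R'eq AR in \<open>auto intro: finite_subset\<close>)
  moreover have "real (deg_in E R' u) < (1 - delta_t d \<delta> (Suc s)) * d * p"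
    using u s1 unfolding pruneA_def prune_step_def R'_def by auto
  moreover have "real (deg_in E R u) \<ge> (1 - delta_t d \<delta> s) * d * p"
  proof (cases "s = 1")
    case True
    thus ?thesis using uA uR unfolding A_def pruneA_def prune_step_def R_def by auto
  next
    case False
    thus ?thesis using uA uR unfolding A_def pruneA_def prune_step_def R_def by auto
  qed
  moreover have "(1 - delta_t d \<delta> s) * d * p - (1 - delta_t d \<delta> (Suc s)) * d * p
      = (delta_t d \<delta> (Suc s) - delta_t d \<delta> s) * d * p" by algebra
  ultimately show ?thesis unfolding A_def by linarith
qed

lemma neighbor_card:
  assumes s1: "1 \<le> s" and u: "u \<in> pruneA d p \<delta> E (Suc s)" and E: "E \<subseteq> cube_edges d"
  shows "real (card {i\<in>{..<d}. sd u {i} \<in> pruneA d p \<delta> E s}) > \<delta> / real (tau d) * d * p"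
proof -
  define I where "I = {i\<in>{..<d}. sd u {i} \<in> pruneA d p \<delta> E s}"
  define W where "W = {w \<in> pruneA d p \<delta> E s. {u, w} \<in> E}"
  have sub: "W \<subseteq> (\<lambda>i. sd u {i}) ` I"
    unfolding W_def I_def using edge_sd E by blast
  have fI: "finite I" unfolding I_def by simp
  have "card W \<le> card ((\<lambda>i. sd u {i}) ` I)"
    by (rule card_mono[OF finite_imageI[OF fI] sub])
  also have "\<dots> \<le> card I" by (rule card_image_le[OF fI])
  finally have cWI: "real (card W) \<le> real (card I)" by simp
  have eq: "delta_t d \<delta> (Suc s) - delta_t d \<delta> s = \<delta> / real (tau d)"
    unfolding delta_t_def by (simp add: algebra_simps add_divide_distrib diff_divide_distrib)
  have "real (card W) > \<delta> / real (tau d) * d * p"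
    using neighbor_count[OF s1 u] unfolding eq W_def .
  with cWI show ?thesis unfolding I_def by linarith
qed

theorem lemma2p3:
  fixes d t :: nat and p \<delta> :: real and E :: "nat set set set" and v :: "nat set"
  assumes "d \<ge> 3"
    and "0 < p" "p \<le> 1"
    and "0 < \<delta>" "\<delta> < 1"
    and "\<delta> * d * p \<ge> 2 * (ln (real d))\<^sup>2"
    and "E \<subseteq> cube_edges d"
    and "2 \<le> t" "t \<le> tau d"
    and "v \<in> pruneA d p \<delta> E t"
  shows "\<exists>X. X \<subseteq> sphere d (t - 1) v
           \<and> real (card X) \<ge> (\<delta> * d * p / (2 * t * ln (real d))) ^ (t - 1)
           \<and> (\<forall>x\<in>X. real (deg_in E (cube_verts d) x)
                 \<notin> {(1 - delta_t d \<delta> 1) * d * p .. (1 + delta_t d \<delta> 1) * d * p})"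
proof -
  define L where "L = ln (real d)"
  define D where "D = \<delta> * d * p"
  define T where "T = real (tau d)"
  define c where "c = D / T - real t"
  have L0: "L > 0" unfolding L_def using assms(1) by simp
  have TL: "T \<le> L" unfolding T_def L_def tau_def using L0 L_def by linarith
  have T2: "T \<ge> 2" unfolding T_def using assms(8,9) by linarith
  have tT: "real t \<le> T" unfolding T_def using assms(9) by simp
  have D0: "D > 0" unfolding D_def using assms(1,2,4) by simp
  have DL: "D \<ge> 2 * L^2" unfolding D_def L_def using assms(6) by simp
  have "D / T \<ge> D / L" using D0 TL T2 by (intro divide_left_mono) auto
  moreover have "D / L \<ge> 2 * L" using DL L0 by (simp add: field_simps power2_eq_square)
  moreover have "D / L - D / (2 * L) = D / (2 * L)" by (simp add: field_simps)
  ultimately have cge: "c \<ge> D / (2 * L)" unfolding c_def using tT TL by linarith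
  have "D / (2 * L) > 0" using D0 L0 by simp
  hence c0: "c \<ge> 0" using cge by linarith
  define A where "A = pruneA d p \<delta> E"
  have step: "real (card {i\<in>{..<d}. sd u {i} \<in> A s}) \<ge> c + real t"
    if "1 \<le> s" "s + 1 \<le> t" "u \<in> A (Suc s)" for s u
  proof -
    have "\<delta> / real (tau d) * real d * p = D / T" unfolding D_def T_def by simp
    thus ?thesis using neighbor_card[OF that(1) that(3)[unfolded A_def] assms(7)]
      unfolding c_def A_def by linarith
  qed
  define Y where "Y = {S. S \<subseteq> {..<d} - {} \<and> card S = t - 1 \<and> sd v S \<in> A 1}"
  have cY: "real (card Y) \<ge> c ^ (t - 1) / fact (t - 1)"
    unfolding Y_def
    by (rule count_lemma[OF c0 step]) (use assms(8,10) in \<open>auto simp: A_def\<close>)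
  have vC: "v \<subseteq> {..<d}" using pruneA_sub[of d p \<delta> E t] assms(10) by (auto simp: cube_verts_def)
  define X where "X = sd v ` Y"
  have inj: "inj_on (sd v) Y" by (metis inj_onI sd_sd)
  have "X \<subseteq> sphere d (t - 1) v"
  proof
    fix x assume "x \<in> X"
    then obtain S where S: "S \<in> Y" "x = sd v S" unfolding X_def by blast
    have "x \<subseteq> {..<d}" using S vC unfolding Y_def sd_def by auto
    thus "x \<in> sphere d (t - 1) v" using S unfolding Y_def sphere_def
      by (auto simp: hdist_sd cube_verts_def)
  qed
  moreover have "\<forall>x\<in>X. real (deg_in E (cube_verts d) x)
                 \<notin> {(1 - delta_t d \<delta> 1) * d * p .. (1 + delta_t d \<delta> 1) * d * p}"
  proof
    fix x assume "x \<in> X"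
    hence xA: "x \<in> A 1" unfolding X_def Y_def by blast
    have "A 1 = {x \<in> cube_verts d. real (deg_in E (cube_verts d) x) \<notin>
        {(1 - delta_t d \<delta> 1) * d * p .. (1 + delta_t d \<delta> 1) * d * p}}"
      unfolding A_def pruneA_def prune_step_def by simp
    with xA show "real (deg_in E (cube_verts d) x)
        \<notin> {(1 - delta_t d \<delta> 1) * d * p .. (1 + delta_t d \<delta> 1) * d * p}" by blast
  qed
  moreover have "real (card X) \<ge> (D / (2 * t * L)) ^ (t - 1)"
  proof -
    have tp: "real t > 0" using assms(8) by simp
    have "(D / (2 * t * L)) ^ (t - 1) = (D / (2 * L)) ^ (t - 1) / real t ^ (t - 1)"
      by (simp add: power_divide field_simps)
    also have "\<dots> \<le> c ^ (t - 1) / real t ^ (t - 1)"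
      using cge D0 L0 tp by (intro divide_right_mono power_mono) auto
    also have "\<dots> \<le> c ^ (t - 1) / fact (t - 1)"
    proof (rule divide_left_mono)
      have "fact (t - 1) \<le> (of_nat ((t - 1) ^ (t - 1)) :: real)" by (rule fact_le_power)
      also have "\<dots> \<le> real t ^ (t - 1)" by (simp add: power_mono)
      finally show "fact (t - 1) \<le> real t ^ (t - 1)" .
    qed (use c0 tp in auto)
    also have "\<dots> \<le> real (card Y)" by (rule cY)
    finally show ?thesis unfolding X_def using card_image[OF inj] by simp
  qed
  ultimately show ?thesis unfolding D_def L_def by (intro exI[of _ X] conjI)
qed

end
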